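(* Let $n\neq 0$ be an integer and let $K$ be a bicolored $n$-Eulerian cubical complex. Then the same number of vertices of $K$ are assigned each of the two colors; in particular $K$ has an even number of vertices.
   Context: A cubical poset is a poset $P$ in which every order ideal $\{z\in P: z\le x\}$ is isomorphic to a product of copies of $I$, where $I$ is the three-element face poset of an interval with the empty face excluded. A cubical complex is a (regular) cell complex whose face poset $P$ (excluding the empty face) is a cubical poset such that $P$ with a minimum and maximum adjoined is a lattice. A bicoloring assigns to each vertex one of two colors so that every edge has one endpoint of each color. The link of a vertex $v$ is the poset of faces strictly containing $v$; its Euler characteristic is the alternating sum $\sum_{i\ge 1}(-1)^{i-1}(\text{number of } i\text{-dimensional faces of } K \text{ containing } v)$. The complex $K$ is $n$-Eulerian if the link of every vertex has Euler characteristic $n$. *)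

theory Defs
  imports Main
begin

definition partial_order_on :: "'a set \<Rightarrow> ('a \<Rightarrow> 'a \<Rightarrow> bool) \<Rightarrow> bool" where
  "partial_order_on F le \<longleftrightarrow>
     (\<forall>x\<in>F. le x x) \<and>
     (\<forall>x\<in>F. \<forall>y\<in>F. le x y \<and> le y x \<longrightarrow> x = y) \<and>
     (\<forall>x\<in>F. \<forall>y\<in>F. \<forall>z\<in>F. le x y \<and> le y z \<longrightarrow> le x z)"

definition order_iso :: "('a \<Rightarrow> 'b) \<Rightarrow> 'a set \<Rightarrow> ('a \<Rightarrow> 'a \<Rightarrow> bool)
    \<Rightarrow> 'b set \<Rightarrow> ('b \<Rightarrow> 'b \<Rightarrow> bool) \<Rightarrow> bool" where
  "order_iso h A leA B leB \<longleftrightarrow>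
     bij_betw h A B \<and> (\<forall>x\<in>A. \<forall>y\<in>A. leA x y \<longleftrightarrow> leB (h x) (h y))"

text \<open>The poset I: faces 0, 1 (the endpoints) and 2 (the whole interval) of an interval,
  empty face excluded. The product of k copies of I is represented by functions
  nat => nat with values in {0,1,2} on {0..<k} and 0 elsewhere, ordered componentwise.\<close>

definition I_le :: "nat \<Rightarrow> nat \<Rightarrow> bool" where
  "I_le a b \<longleftrightarrow> a = b \<or> b = 2"

definition cube_faces :: "nat \<Rightarrow> (nat \<Rightarrow> nat) set" where
  "cube_faces k = {f. (\<forall>i<k. f i \<in> {0, 1, 2}) \<and> (\<forall>i\<ge>k. f i = 0)}"

definition cube_le :: "(nat \<Rightarrow> nat) \<Rightarrow> (nat \<Rightarrow> nat) \<Rightarrow> bool" where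
  "cube_le f g \<longleftrightarrow> (\<forall>i. I_le (f i) (g i))"

definition down_set :: "'a set \<Rightarrow> ('a \<Rightarrow> 'a \<Rightarrow> bool) \<Rightarrow> 'a \<Rightarrow> 'a set" where
  "down_set F le x = {z\<in>F. le z x}"

definition cubical_poset :: "'a set \<Rightarrow> ('a \<Rightarrow> 'a \<Rightarrow> bool) \<Rightarrow> bool" where
  "cubical_poset F le \<longleftrightarrow> partial_order_on F le \<and>
     (\<forall>x\<in>F. \<exists>k h. order_iso h (down_set F le x) le (cube_faces k) cube_le)"

definition face_dim :: "'a set \<Rightarrow> ('a \<Rightarrow> 'a \<Rightarrow> bool) \<Rightarrow> 'a \<Rightarrow> nat" where
  "face_dim F le x = (THE k. \<exists>h. order_iso h (down_set F le x) le (cube_faces k) cube_le)"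

datatype 'a ext = Bot | Elt 'a | Top

fun ext_le :: "('a \<Rightarrow> 'a \<Rightarrow> bool) \<Rightarrow> 'a ext \<Rightarrow> 'a ext \<Rightarrow> bool" where
  "ext_le le Bot _ = True"
| "ext_le le (Elt x) Bot = False"
| "ext_le le (Elt x) (Elt y) = le x y"
| "ext_le le (Elt x) Top = True"
| "ext_le le Top y = (y = Top)"

definition ext_carrier :: "'a set \<Rightarrow> 'a ext set" where
  "ext_carrier F = {Bot, Top} \<union> Elt ` F"

definition is_lattice :: "'b set \<Rightarrow> ('b \<Rightarrow> 'b \<Rightarrow> bool) \<Rightarrow> bool" where
  "is_lattice A le \<longleftrightarrow>
     (\<forall>x\<in>A. \<forall>y\<in>A.
        (\<exists>s\<in>A. le x s \<and> le y s \<and> (\<forall>u\<in>A. le x u \<and> le y u \<longrightarrow> le s u)) \<and>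
        (\<exists>m\<in>A. le m x \<and> le m y \<and> (\<forall>u\<in>A. le u x \<and> le u y \<longrightarrow> le u m)))"

text \<open>A (finite) cubical complex, given by its face poset (empty face excluded).\<close>

definition cubical_complex :: "'a set \<Rightarrow> ('a \<Rightarrow> 'a \<Rightarrow> bool) \<Rightarrow> bool" where
  "cubical_complex F le \<longleftrightarrow> finite F \<and> cubical_poset F le \<and>
     is_lattice (ext_carrier F) (ext_le le)"

definition vertices :: "'a set \<Rightarrow> ('a \<Rightarrow> 'a \<Rightarrow> bool) \<Rightarrow> 'a set" where
  "vertices F le = {x\<in>F. face_dim F le x = 0}"

definition edges :: "'a set \<Rightarrow> ('a \<Rightarrow> 'a \<Rightarrow> bool) \<Rightarrow> 'a set" where
  "edges F le = {x\<in>F. face_dim F le x = 1}"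

definition bicoloring :: "'a set \<Rightarrow> ('a \<Rightarrow> 'a \<Rightarrow> bool) \<Rightarrow> ('a \<Rightarrow> bool) \<Rightarrow> bool" where
  "bicoloring F le col \<longleftrightarrow>
     (\<forall>e\<in>edges F le. \<forall>u\<in>vertices F le. \<forall>v\<in>vertices F le.
        le u e \<and> le v e \<and> u \<noteq> v \<longrightarrow> col u \<noteq> col v)"

definition link_euler_char :: "'a set \<Rightarrow> ('a \<Rightarrow> 'a \<Rightarrow> bool) \<Rightarrow> 'a \<Rightarrow> int" where
  "link_euler_char F le v =
     (\<Sum>y\<in>{y\<in>F. le v y \<and> y \<noteq> v}. (-1) ^ (face_dim F le y - 1))"

definition n_Eulerian :: "int \<Rightarrow> 'a set \<Rightarrow> ('a \<Rightarrow> 'a \<Rightarrow> bool) \<Rightarrow> bool" where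
  "n_Eulerian n F le \<longleftrightarrow> (\<forall>v\<in>vertices F le. link_euler_char F le v = n)"

end

theory Submission imports Defs "HOL-Library.FuncSet" begin

lemma card_cube: "card (cube_faces k) = 3 ^ k"
proof -
  have "bij_betw (\<lambda>f. restrict f {..<k}) (cube_faces k) (PiE {..<k} (\<lambda>_. {0,1,2::nat}))"
  proof (rule bij_betw_byWitness[where f'="\<lambda>g i. if i < k then g i else 0"])
    show "\<forall>a\<in>cube_faces k. (\<lambda>i. if i < k then restrict a {..<k} i else 0) = a"
      unfolding cube_faces_def fun_eq_iff by (simp add: not_less)
    show "\<forall>a'\<in>PiE {..<k} (\<lambda>_. {0,1,2::nat}). restrict (\<lambda>i. if i < k then a' i else 0) {..<k} = a'"
      by (auto simp: PiE_def extensional_def fun_eq_iff)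
    show "(\<lambda>f. restrict f {..<k}) ` cube_faces k \<subseteq> PiE {..<k} (\<lambda>_. {0,1,2::nat})"
    proof (rule image_subsetI)
      fix f assume "f \<in> cube_faces k"
      then show "restrict f {..<k} \<in> PiE {..<k} (\<lambda>_. {0,1,2::nat})"
        unfolding restrict_PiE_iff cube_faces_def by auto
    qed
    show "(\<lambda>g i. if i < k then g i else 0) ` PiE {..<k} (\<lambda>_. {0,1,2::nat}) \<subseteq> cube_faces k"
      by (auto simp: cube_faces_def PiE_def Pi_def)
  qed
  then have "card (cube_faces k) = card (PiE {..<k} (\<lambda>_. {0,1,2::nat}))"
    by (rule bij_betw_same_card)
  also have "\<dots> = 3 ^ k" by (simp add: card_PiE numeral_3_eq_3)
  finally show ?thesis .
qed

lemma pow3_inj: "(3::nat)^a = 3^b \<Longrightarrow> a = b" by simp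

lemma face_dim_eq:
  assumes "order_iso h (down_set F le x) le (cube_faces k) cube_le"
  shows "face_dim F le x = k"
  unfolding face_dim_def
proof (rule the_equality)
  show "\<exists>h. order_iso h (down_set F le x) le (cube_faces k) cube_le" using assms by blast
next
  fix k' assume "\<exists>h. order_iso h (down_set F le x) le (cube_faces k') cube_le"
  then obtain h' where "order_iso h' (down_set F le x) le (cube_faces k') cube_le" by blast
  then have "card (down_set F le x) = 3 ^ k'"
    unfolding order_iso_def by (metis bij_betw_same_card card_cube)
  moreover have "card (down_set F le x) = 3 ^ k"
    using assms unfolding order_iso_def by (metis bij_betw_same_card card_cube)
  ultimately show "k' = k" by simp
qed

lemma dim_card:
  assumes "cubical_poset F le" "x \<in> F"
  shows "card (down_set F le x) = 3 ^ face_dim F le x"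
proof -
  obtain k h where h: "order_iso h (down_set F le x) le (cube_faces k) cube_le"
    using assms unfolding cubical_poset_def by blast
  then have "face_dim F le x = k" by (rule face_dim_eq)
  with h show ?thesis unfolding order_iso_def by (metis bij_betw_same_card card_cube)
qed

lemma vertex_iff:
  assumes "cubical_poset F le"
  shows "x \<in> vertices F le \<longleftrightarrow> x \<in> F \<and> (\<forall>z\<in>F. le z x \<longrightarrow> z = x)"
proof (cases "x \<in> F")
  case True
  have refl: "le x x" using assms True unfolding cubical_poset_def partial_order_on_def by blast
  have c: "card (down_set F le x) = 3 ^ face_dim F le x" using dim_card[OF assms True] .
  have xin: "x \<in> down_set F le x" using True refl by (simp add: down_set_def)
  show ?thesis
  proof
    assume "x \<in> vertices F le"
    then have "card (down_set F le x) = 1" using c by (simp add: vertices_def)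
    then obtain a where "down_set F le x = {a}" using card_1_singletonE by blast
    then show "x \<in> F \<and> (\<forall>z\<in>F. le z x \<longrightarrow> z = x)" using xin True by (auto simp: down_set_def)
  next
    assume "x \<in> F \<and> (\<forall>z\<in>F. le z x \<longrightarrow> z = x)"
    then have "down_set F le x = {x}" using xin by (auto simp: down_set_def)
    then have "(3::nat) ^ face_dim F le x = 3 ^ 0" using c by simp
    then have "face_dim F le x = 0" by (rule pow3_inj)
    then show "x \<in> vertices F le" using True by (simp add: vertices_def)
  qed
qed (simp add: vertices_def)

lemma edge_if:
  assumes "cubical_poset F le" "x \<in> F" "card (down_set F le x) = 3"
  shows "x \<in> edges F le"
proof -
  have "(3::nat) ^ face_dim F le x = 3 ^ 1" using dim_card[OF assms(1,2)] assms(3) by simp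
  then have "face_dim F le x = 1" by (rule pow3_inj)
  then show ?thesis using assms by (simp add: edges_def)
qed

lemma balanced:
  assumes cp: "cubical_poset F le" and bc: "bicoloring F le col"
    and yF: "y \<in> F" and ynv: "y \<notin> vertices F le"
  shows "card {v \<in> vertices F le. le v y \<and> col v} = card {v \<in> vertices F le. le v y \<and> \<not> col v}"
proof -
  obtain d h where h: "order_iso h (down_set F le y) le (cube_faces d) cube_le"
    using cp yF unfolding cubical_poset_def by blast
  have dd: "face_dim F le y = d" using h by (rule face_dim_eq)
  have d0: "0 < d" using ynv yF dd by (simp add: vertices_def)
  define D where "D = down_set F le y"
  have bij: "bij_betw h D (cube_faces d)" using h unfolding order_iso_def D_def by blast
  have ord: "\<And>a b. a \<in> D \<Longrightarrow> b \<in> D \<Longrightarrow> le a b \<longleftrightarrow> cube_le (h a) (h b)"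
    using h unfolding order_iso_def D_def by blast
  have po: "partial_order_on F le" using cp unfolding cubical_poset_def by blast
  have trans: "\<And>a b c. a \<in> F \<Longrightarrow> b \<in> F \<Longrightarrow> c \<in> F \<Longrightarrow> le a b \<Longrightarrow> le b c \<Longrightarrow> le a c"
    using po unfolding partial_order_on_def by blast
  have DF: "D \<subseteq> F" by (auto simp: D_def down_set_def)
  have Dle: "\<And>u. u \<in> D \<Longrightarrow> le u y" by (auto simp: D_def down_set_def)
  have inD: "\<And>u. u \<in> F \<Longrightarrow> le u y \<Longrightarrow> u \<in> D" by (auto simp: D_def down_set_def)
  define hi where "hi = the_inv_into D h"
  have hi_in: "\<And>g. g \<in> cube_faces d \<Longrightarrow> hi g \<in> D"
    using bij bij_betw_the_inv_into bij_betwE hi_def by metis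
  have h_hi: "\<And>g. g \<in> cube_faces d \<Longrightarrow> h (hi g) = g"
    using bij f_the_inv_into_f_bij_betw hi_def by metis
  have hi_h: "\<And>x. x \<in> D \<Longrightarrow> hi (h x) = x"
    using bij the_inv_into_f_f hi_def bij_betw_def by metis
  have h_in: "\<And>x. x \<in> D \<Longrightarrow> h x \<in> cube_faces d" using bij bij_betwE by blast
  define B where "B = {g \<in> cube_faces d. \<forall>i. g i \<noteq> 2}"
  have vert: "u \<in> vertices F le \<longleftrightarrow> h u \<in> B" if uD: "u \<in> D" for u
  proof
    assume uv: "u \<in> vertices F le"
    have hu: "h u \<in> cube_faces d" using h_in uD .
    show "h u \<in> B"
    proof (rule ccontr)
      assume "h u \<notin> B"
      then obtain i where i: "h u i = 2" using hu B_def by blast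
      have "i < d" using hu i by (auto simp: cube_faces_def) (metis not_le zero_neq_numeral)
      define g' where "g' = (h u)(i := 0)"
      have g'c: "g' \<in> cube_faces d" using hu by (auto simp: cube_faces_def g'_def)
      have "cube_le g' (h u)" using i by (auto simp: cube_le_def I_le_def g'_def)
      then have "le (hi g') u" using ord[OF hi_in[OF g'c] uD] h_hi[OF g'c] by simp
      then have "hi g' = u" using uv vertex_iff[OF cp] hi_in[OF g'c] DF by blast
      then have "g' = h u" using h_hi[OF g'c] by simp
      then show False using i g'_def by (metis fun_upd_same zero_neq_numeral)
    qed
  next
    assume huB: "h u \<in> B"
    have "\<forall>z\<in>F. le z u \<longrightarrow> z = u"
    proof (intro ballI impI)
      fix z assume zF: "z \<in> F" and zu: "le z u"
      have zD: "z \<in> D" using trans[OF zF _ yF zu Dle[OF uD]] uD DF inD zF by blast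
      have "cube_le (h z) (h u)" using ord[OF zD uD] zu by simp
      then have "h z = h u" using huB unfolding B_def cube_le_def I_le_def by auto
      then show "z = u" using hi_h zD uD by metis
    qed
    then show "u \<in> vertices F le" using vertex_iff[OF cp] uD DF by blast
  qed
  define fl where "fl g = g(0 := 1 - g 0)" for g :: "nat \<Rightarrow> nat"
  have B01: "\<And>g. g \<in> B \<Longrightarrow> g 0 = 0 \<or> g 0 = 1"
    using d0 by (auto simp: B_def cube_faces_def)
  have flB: "\<And>g. g \<in> B \<Longrightarrow> fl g \<in> B"
  proof -
    fix g assume gB: "g \<in> B"
    then show "fl g \<in> B" using B01[OF gB] d0
      by (auto simp: B_def cube_faces_def fl_def)
  qed
  have flfl: "\<And>g. g \<in> B \<Longrightarrow> fl (fl g) = g"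
  proof -
    fix g assume "g \<in> B"
    then have "g 0 = 0 \<or> g 0 = 1" by (rule B01)
    then show "fl (fl g) = g" unfolding fl_def fun_eq_iff by auto
  qed
  have colfl: "col (hi (fl g)) \<noteq> col (hi g)" if gB: "g \<in> B" for g
  proof -
    have gc: "g \<in> cube_faces d" using gB B_def by blast
    have fc: "fl g \<in> cube_faces d" using flB[OF gB] B_def by blast
    define e' where "e' = g(0 := 2)"
    have ec: "e' \<in> cube_faces d" using gc d0 by (auto simp: cube_faces_def e'_def)
    define e where "e = hi e'"
    have eD: "e \<in> D" using hi_in[OF ec] e_def by simp
    have ne1: "g \<noteq> fl g" using B01[OF gB] by (auto simp: fl_def fun_eq_iff)
    have ne2: "g \<noteq> e'" using B01[OF gB] by (auto simp: e'_def fun_eq_iff)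
    have ne3: "fl g \<noteq> e'" using B01[OF gB] by (auto simp: e'_def fl_def fun_eq_iff)
    have ds: "down_set F le e = {hi g, hi (fl g), e}"
    proof
      show "down_set F le e \<subseteq> {hi g, hi (fl g), e}"
      proof
        fix z assume "z \<in> down_set F le e"
        then have zF: "z \<in> F" and ze: "le z e" by (auto simp: down_set_def)
        have zD: "z \<in> D" using trans[OF zF _ yF ze Dle[OF eD]] eD DF inD zF by blast
        have cl: "cube_le (h z) e'" using ord[OF zD eD] ze h_hi[OF ec] e_def by simp
        have hz: "h z \<in> cube_faces d" using h_in[OF zD] .
        have oth: "\<And>i. i \<noteq> 0 \<Longrightarrow> h z i = g i"
        proof -
          fix i :: nat assume i0: "i \<noteq> 0"
          have "I_le (h z i) (e' i)" using cl unfolding cube_le_def by blast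
          moreover have "e' i = g i" using i0 by (simp add: e'_def)
          moreover have "g i \<noteq> 2" using gB by (simp add: B_def)
          ultimately show "h z i = g i" by (simp add: I_le_def)
        qed
        have z0: "h z 0 \<in> {0,1,2}" using hz d0 by (auto simp: cube_faces_def)
        have "h z = g \<or> h z = fl g \<or> h z = e'"
        proof -
          consider "h z 0 = g 0" | "h z 0 = 2" | "h z 0 = 1 - g 0"
            using z0 B01[OF gB] by auto
          then show ?thesis
          proof cases
            case 1 then show ?thesis using oth by (metis ext)
          next
            case 2 then have "h z = e'" using oth unfolding e'_def by (metis fun_upd_apply ext)
            then show ?thesis by simp
          next
            case 3 then have "h z = fl g" using oth unfolding fl_def by (metis fun_upd_apply ext)
            then show ?thesis by simp
          qed
        qed
        then show "z \<in> {hi g, hi (fl g), e}" using hi_h[OF zD] e_def by auto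
      qed
    next
      have a: "cube_le g e'" "cube_le (fl g) e'" "cube_le e' e'"
        by (auto simp: cube_le_def I_le_def e'_def fl_def)
      show "{hi g, hi (fl g), e} \<subseteq> down_set F le e"
        using ord[OF hi_in[OF gc] eD] ord[OF hi_in[OF fc] eD] ord[OF eD eD] a
          h_hi[OF gc] h_hi[OF fc] h_hi[OF ec] e_def hi_in[OF gc] hi_in[OF fc] eD DF
        by (auto simp: down_set_def)
    qed
    have "hi g \<noteq> hi (fl g)" using ne1 h_hi[OF gc] h_hi[OF fc] by metis
    moreover have "hi g \<noteq> e" using ne2 h_hi[OF gc] h_hi[OF ec] e_def by metis
    moreover have "hi (fl g) \<noteq> e" using ne3 h_hi[OF fc] h_hi[OF ec] e_def by metis
    ultimately have "card (down_set F le e) = 3" using ds by simp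
    then have eE: "e \<in> edges F le" using edge_if[OF cp] eD DF by blast
    have v1: "hi g \<in> vertices F le" using vert[OF hi_in[OF gc]] h_hi[OF gc] gB by simp
    have v2: "hi (fl g) \<in> vertices F le" using vert[OF hi_in[OF fc]] h_hi[OF fc] flB[OF gB] by simp
    have l1: "le (hi g) e" and l2: "le (hi (fl g)) e" using ds by (auto simp: down_set_def)
    show ?thesis using bc eE v1 v2 l1 l2 \<open>hi g \<noteq> hi (fl g)\<close> unfolding bicoloring_def by metis
  qed
  have cB: "card {g \<in> B. col (hi g)} = card {g \<in> B. \<not> col (hi g)}"
  proof (rule bij_betw_same_card[of fl])
    show "bij_betw fl {g \<in> B. col (hi g)} {g \<in> B. \<not> col (hi g)}"
    proof (rule bij_betw_byWitness[where f'=fl])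
      show "\<forall>a\<in>{g \<in> B. col (hi g)}. fl (fl a) = a" using flfl by blast
      show "\<forall>a\<in>{g \<in> B. \<not> col (hi g)}. fl (fl a) = a" using flfl by blast
      show "fl ` {g \<in> B. col (hi g)} \<subseteq> {g \<in> B. \<not> col (hi g)}" using flB colfl by auto
      show "fl ` {g \<in> B. \<not> col (hi g)} \<subseteq> {g \<in> B. col (hi g)}" using flB colfl by auto
    qed
  qed
  have tr: "{v \<in> vertices F le. le v y \<and> col v = c} = hi ` {g \<in> B. col (hi g) = c}" for c
  proof
    show "{v \<in> vertices F le. le v y \<and> col v = c} \<subseteq> hi ` {g \<in> B. col (hi g) = c}"
    proof
      fix v assume v: "v \<in> {v \<in> vertices F le. le v y \<and> col v = c}"
      then have vD: "v \<in> D" using inD by (simp add: vertices_def)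
      then have "h v \<in> B" using vert v by blast
      then show "v \<in> hi ` {g \<in> B. col (hi g) = c}" using hi_h[OF vD] v
        by (metis (mono_tags, lifting) image_eqI mem_Collect_eq)
    qed
  next
    show "hi ` {g \<in> B. col (hi g) = c} \<subseteq> {v \<in> vertices F le. le v y \<and> col v = c}"
    proof
      fix v assume "v \<in> hi ` {g \<in> B. col (hi g) = c}"
      then obtain g where gB: "g \<in> B" and c: "col (hi g) = c" and v: "v = hi g" by blast
      have gc: "g \<in> cube_faces d" using gB B_def by blast
      have "hi g \<in> vertices F le" using vert[OF hi_in[OF gc]] h_hi[OF gc] gB by simp
      then show "v \<in> {v \<in> vertices F le. le v y \<and> col v = c}" using v c Dle[OF hi_in[OF gc]] by simp
    qed
  qed
  have inj: "inj_on hi B" using h_hi B_def by (metis (no_types, lifting) inj_onI mem_Collect_eq)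
  have "card {v \<in> vertices F le. le v y \<and> col v = c} = card {g \<in> B. col (hi g) = c}" for c
    unfolding tr by (rule card_image) (rule inj_on_subset[OF inj], blast)
  from this[of True] this[of False] cB show ?thesis by simp
qed


lemma signed_sum:
  assumes "finite S"
  shows "(\<Sum>v\<in>S. (if col v then 1 else -1 :: int)) = int (card {v\<in>S. col v}) - int (card {v\<in>S. \<not> col v})"
proof -
  have "(\<Sum>v\<in>S. (if col v then 1 else -1 :: int)) = (\<Sum>v\<in>S \<inter> {x. col x}. 1) + (\<Sum>v\<in>S \<inter> - {x. col x}. -1)"
    by (rule sum.If_cases[OF assms])
  moreover have "S \<inter> {x. col x} = {v\<in>S. col v}" "S \<inter> - {x. col x} = {v\<in>S. \<not> col v}" by auto
  ultimately show ?thesis by simp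
qed

theorem theorem2p2:
  fixes F :: "'a set" and le :: "'a \<Rightarrow> 'a \<Rightarrow> bool" and col :: "'a \<Rightarrow> bool" and n :: int
  assumes "n \<noteq> 0"
    and "cubical_complex F le"
    and "bicoloring F le col"
    and "n_Eulerian n F le"
  shows "card {v\<in>vertices F le. col v} = card {v\<in>vertices F le. \<not> col v}
         \<and> even (card (vertices F le))"
proof -
  have fin: "finite F" and cp: "cubical_poset F le" using assms(2) unfolding cubical_complex_def by auto
  define V where "V = vertices F le"
  have VF: "V \<subseteq> F" by (auto simp: V_def vertices_def)
  have finV: "finite V" using fin VF finite_subset by blast
  define s where "s v = (if col v then 1 else -1 :: int)" for v
  define c where "c y = ((-1::int) ^ (face_dim F le y - 1))" for y
  have "(\<Sum>v\<in>V. s v * link_euler_char F le v) = (\<Sum>v\<in>V. s v * n)"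
    using assms(4) unfolding n_Eulerian_def V_def by simp
  also have "\<dots> = n * (\<Sum>v\<in>V. s v)" by (simp add: sum_distrib_left mult.commute)
  finally have e1: "(\<Sum>v\<in>V. s v * link_euler_char F le v) = n * (\<Sum>v\<in>V. s v)" .
  have "(\<Sum>v\<in>V. s v * link_euler_char F le v) = (\<Sum>v\<in>V. \<Sum>y\<in>{y. y \<in> F \<and> (le v y \<and> y \<noteq> v)}. s v * c y)"
    unfolding link_euler_char_def c_def by (simp add: sum_distrib_left)
  also have "\<dots> = (\<Sum>y\<in>F. \<Sum>v\<in>{v. v \<in> V \<and> (le v y \<and> y \<noteq> v)}. s v * c y)"
    by (rule sum.swap_restrict[OF finV fin])
  also have "\<dots> = (\<Sum>y\<in>F. c y * (\<Sum>v\<in>{v. v \<in> V \<and> (le v y \<and> y \<noteq> v)}. s v))"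
    by (simp add: sum_distrib_left mult.commute)
  also have "\<dots> = 0"
  proof (rule sum.neutral, rule ballI)
    fix y assume yF: "y \<in> F"
    show "c y * (\<Sum>v\<in>{v. v \<in> V \<and> (le v y \<and> y \<noteq> v)}. s v) = 0"
    proof (cases "y \<in> V")
      case True
      then have "{v. v \<in> V \<and> (le v y \<and> y \<noteq> v)} = {}"
        using vertex_iff[OF cp] VF unfolding V_def by blast
      then show ?thesis by (metis sum.empty mult_zero_right)
    next
      case False
      then have eq: "{v. v \<in> V \<and> (le v y \<and> y \<noteq> v)} = {v \<in> V. le v y}" by auto
      have fs: "finite {v \<in> V. le v y}" using finV by simp
      have "(\<Sum>v\<in>{v \<in> V. le v y}. s v) = int (card {v\<in>{v \<in> V. le v y}. col v}) - int (card {v\<in>{v \<in> V. le v y}. \<not> col v})"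
        unfolding s_def by (rule signed_sum[OF fs])
      also have "\<dots> = 0"
      proof -
        have "{v\<in>{v \<in> V. le v y}. col v} = {v \<in> vertices F le. le v y \<and> col v}"
             "{v\<in>{v \<in> V. le v y}. \<not> col v} = {v \<in> vertices F le. le v y \<and> \<not> col v}"
          unfolding V_def by auto
        then show ?thesis using balanced[OF cp assms(3) yF] False unfolding V_def by simp
      qed
      finally show ?thesis using eq by simp
    qed
  qed
  finally have "n * (\<Sum>v\<in>V. s v) = 0" using e1 by simp
  then have "(\<Sum>v\<in>V. s v) = 0" using assms(1) by simp
  then have "int (card {v\<in>V. col v}) - int (card {v\<in>V. \<not> col v}) = 0"
    using signed_sum[OF finV, of col] unfolding s_def by simp
  then have eqc: "card {v\<in>V. col v} = card {v\<in>V. \<not> col v}" by simp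
  have "V = {v\<in>V. col v} \<union> {v\<in>V. \<not> col v}" by auto
  then have "card V = card {v\<in>V. col v} + card {v\<in>V. \<not> col v}"
    using finV by (metis (no_types, lifting) card_Un_disjoint disjoint_iff finite_Un mem_Collect_eq)
  then have "even (card V)" using eqc by simp
  then show ?thesis using eqc unfolding V_def by simp
qed

end
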